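(* Let $C\subset\mathbb{P}^2$ be a Frobenius nonclassical curve over $\mathbb{F}_q$ which is irreducible over $\mathbb{F}_q$ and admits a transverse line $L$ defined over $\mathbb{F}_q$. Then every point of $L\cap C$ is an $\mathbb{F}_q$-point, and $C$ is geometrically irreducible.
   Context: A plane curve $C=\{F=0\}$ over $\mathbb{F}_q$ is Frobenius nonclassical if $F$ divides $\sum_{i=0}^2 x_i^q\frac{\partial F}{\partial x_i}$. A line $L$ is transverse to $C$ if $L$ passes through no singular point of $C$ and is not tangent to $C$ at any smooth point of $C$. *)

theory Defs
  imports "HOL-Algebra.Algebraic_Closure_Type"
begin

text \<open>Polynomials in three variables x0, x1, x2 over a ring 'a are represented as
  nested univariate polynomials  'a poly poly poly : the innermost variable is x0,
  the middle one x1, the outermost one x2.\<close>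

type_synonym 'a poly3 = "'a poly poly poly"

definition X0 :: "'a::comm_ring_1 poly3" where "X0 = [:[:[:0, 1:]:]:]"
definition X1 :: "'a::comm_ring_1 poly3" where "X1 = [:[:0, 1:]:]"
definition X2 :: "'a::comm_ring_1 poly3" where "X2 = [:0, 1:]"

definition coeff3 :: "'a::zero poly3 \<Rightarrow> nat \<Rightarrow> nat \<Rightarrow> nat \<Rightarrow> 'a" where
  "coeff3 F i j k = coeff (coeff (coeff F k) j) i"

definition homogeneous3 :: "'a::zero poly3 \<Rightarrow> nat \<Rightarrow> bool" where
  "homogeneous3 F d \<longleftrightarrow> (\<forall>i j k. coeff3 F i j k \<noteq> 0 \<longrightarrow> i + j + k = d)"

definition pd0 :: "'a::idom poly3 \<Rightarrow> 'a poly3" where "pd0 F = map_poly (map_poly pderiv) F"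
definition pd1 :: "'a::idom poly3 \<Rightarrow> 'a poly3" where "pd1 F = map_poly pderiv F"
definition pd2 :: "'a::idom poly3 \<Rightarrow> 'a poly3" where "pd2 F = pderiv F"

definition eval3 :: "'a::comm_semiring_0 poly3 \<Rightarrow> 'a \<Rightarrow> 'a \<Rightarrow> 'a \<Rightarrow> 'a" where
  "eval3 F a0 a1 a2 = poly (map_poly (\<lambda>c. poly (map_poly (\<lambda>e. poly e a0) c) a1) F) a2"

definition map3 :: "('a::zero \<Rightarrow> 'b::zero) \<Rightarrow> 'a poly3 \<Rightarrow> 'b poly3" where
  "map3 f F = map_poly (map_poly (map_poly f)) F"

definition frobenius_nonclassical :: "'a::finite_field poly3 \<Rightarrow> bool" where
  "frobenius_nonclassical F \<longleftrightarrow>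
     F dvd (X0 ^ card (UNIV :: 'a set) * pd0 F + X1 ^ card (UNIV :: 'a set) * pd1 F + X2 ^ card (UNIV :: 'a set) * pd2 F)"

text \<open>Geometric points of P^2 are nonzero triples over the algebraic closure
  (statements below are invariant under scaling).\<close>
definition nonzero3 :: "'b::zero \<Rightarrow> 'b \<Rightarrow> 'b \<Rightarrow> bool" where
  "nonzero3 a0 a1 a2 \<longleftrightarrow> \<not> (a0 = 0 \<and> a1 = 0 \<and> a2 = 0)"

definition on_curve :: "'b::comm_ring_1 poly3 \<Rightarrow> 'b \<Rightarrow> 'b \<Rightarrow> 'b \<Rightarrow> bool" where
  "on_curve G x0 x1 x2 \<longleftrightarrow> nonzero3 x0 x1 x2 \<and> eval3 G x0 x1 x2 = 0"

definition singular_point :: "'b::idom poly3 \<Rightarrow> 'b \<Rightarrow> 'b \<Rightarrow> 'b \<Rightarrow> bool" where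
  "singular_point G x0 x1 x2 \<longleftrightarrow> on_curve G x0 x1 x2 \<and>
     eval3 (pd0 G) x0 x1 x2 = 0 \<and> eval3 (pd1 G) x0 x1 x2 = 0 \<and> eval3 (pd2 G) x0 x1 x2 = 0"

definition smooth_point :: "'b::idom poly3 \<Rightarrow> 'b \<Rightarrow> 'b \<Rightarrow> 'b \<Rightarrow> bool" where
  "smooth_point G x0 x1 x2 \<longleftrightarrow> on_curve G x0 x1 x2 \<and> \<not> singular_point G x0 x1 x2"

definition on_line :: "'b::comm_ring_1 \<Rightarrow> 'b \<Rightarrow> 'b \<Rightarrow> 'b \<Rightarrow> 'b \<Rightarrow> 'b \<Rightarrow> bool" where
  "on_line l0 l1 l2 x0 x1 x2 \<longleftrightarrow> nonzero3 x0 x1 x2 \<and> l0 * x0 + l1 * x1 + l2 * x2 = 0"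

definition tangent_at :: "'b::field poly3 \<Rightarrow> 'b \<Rightarrow> 'b \<Rightarrow> 'b \<Rightarrow> 'b \<Rightarrow> 'b \<Rightarrow> 'b \<Rightarrow> bool" where
  "tangent_at G l0 l1 l2 x0 x1 x2 \<longleftrightarrow> smooth_point G x0 x1 x2 \<and> on_line l0 l1 l2 x0 x1 x2 \<and>
     (\<exists>c. l0 = c * eval3 (pd0 G) x0 x1 x2 \<and> l1 = c * eval3 (pd1 G) x0 x1 x2
          \<and> l2 = c * eval3 (pd2 G) x0 x1 x2)"

definition transverse :: "'b::field poly3 \<Rightarrow> 'b \<Rightarrow> 'b \<Rightarrow> 'b \<Rightarrow> bool" where
  "transverse G l0 l1 l2 \<longleftrightarrow>
     (\<forall>x0 x1 x2. on_line l0 l1 l2 x0 x1 x2 \<longrightarrow> \<not> singular_point G x0 x1 x2) \<and>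
     (\<forall>x0 x1 x2. \<not> tangent_at G l0 l1 l2 x0 x1 x2)"

definition rational_point :: "('a \<Rightarrow> 'b::field) \<Rightarrow> 'b \<Rightarrow> 'b \<Rightarrow> 'b \<Rightarrow> bool" where
  "rational_point f x0 x1 x2 \<longleftrightarrow>
     (\<exists>c. c \<noteq> 0 \<and> c * x0 \<in> range f \<and> c * x1 \<in> range f \<and> c * x2 \<in> range f)"

end

theory Submission
  imports Defs
begin

definition rhom :: "('a::comm_ring_1 \<Rightarrow> 'b::comm_ring_1) \<Rightarrow> bool" where
  "rhom f \<longleftrightarrow> f 0 = 0 \<and> f 1 = 1 \<and> (\<forall>x y. f (x + y) = f x + f y) \<and> (\<forall>x y. f (x * y) = f x * f y)"

lemma rhomD:
  assumes "rhom f"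
  shows "f 0 = 0" "f 1 = 1" "f (x + y) = f x + f y" "f (x * y) = f x * f y"
  using assms unfolding rhom_def by auto

lemma rhomI:
  assumes "f 0 = 0" "f 1 = 1" "\<And>x y. f (x + y) = f x + f y" "\<And>x y. f (x * y) = f x * f y"
  shows "rhom f"
  using assms unfolding rhom_def by auto

lemma rhom_minus: assumes "rhom f" shows "f (- x) = - f x"
proof -
  have "f (-x) + f x = 0" using rhomD(3)[OF assms, of "-x" x] rhomD(1)[OF assms] by simp
  thus ?thesis by (simp add: eq_neg_iff_add_eq_0)
qed

lemma rhom_diff: assumes "rhom f" shows "f (x - y) = f x - f y"
  using rhomD(3)[OF assms, of x "-y"] rhom_minus[OF assms, of y] by simp

lemma rhom_power: assumes "rhom f" shows "f (x ^ n) = f x ^ n"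
  by (induction n) (simp_all add: rhomD[OF assms])

lemma rhom_sum: assumes "rhom f" shows "f (sum g A) = (\<Sum>x\<in>A. f (g x))"
  by (induction A rule: infinite_finite_induct) (simp_all add: rhomD[OF assms])

lemma rhom_prod: assumes "rhom f" shows "f (prod g A) = (\<Prod>x\<in>A. f (g x))"
  by (induction A rule: infinite_finite_induct) (simp_all add: rhomD[OF assms])

lemma rhom_of_nat: assumes "rhom f" shows "f (of_nat n) = of_nat n"
  by (induction n) (simp_all add: rhomD[OF assms])

lemma rhom_comp: assumes "rhom f" "rhom g" shows "rhom (\<lambda>x. g (f x))"
  using assms unfolding rhom_def by auto

lemma rhom_id: "rhom (\<lambda>x. x)"
  unfolding rhom_def by auto

lemma rhom_map_poly: assumes "rhom f" shows "rhom (map_poly f)"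
proof (rule rhomI)
  note h = rhomD[OF assms]
  show "map_poly f 0 = 0" by simp
  show "map_poly f 1 = 1" by (simp add: h)
  show "map_poly f (x + y) = map_poly f x + map_poly f y" for x y
    by (rule poly_eqI) (simp add: coeff_map_poly h)
  show "map_poly f (x * y) = map_poly f x * map_poly f y" for x y
    by (rule poly_eqI) (simp add: coeff_map_poly h coeff_mult rhom_sum[OF assms])
qed

lemma rhom_poly_eval: "rhom (\<lambda>p. poly p x)"
  by (rule rhomI) simp_all

lemma rhom_const: "rhom (\<lambda>c. [:c:])"
  by (rule rhomI) simp_all

lemma rhom_to_ac: "rhom to_ac"
  by (rule rhomI) simp_all

lemma rhom_poly: assumes "rhom f" shows "f (poly p x) = poly (map_poly f p) (f x)"
proof (induction p rule: pCons_induct)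
  case 0
  then show ?case by (simp add: rhomD[OF assms])
next
  case (pCons a p)
  then show ?case by (simp add: rhomD[OF assms] map_poly_pCons)
qed

lemma rhom_eval3: "rhom (\<lambda>F. eval3 F a0 a1 a2)"
proof -
  have "rhom (\<lambda>c. poly (map_poly (\<lambda>e. poly e a0) c) a1)"
    by (rule rhom_comp[OF rhom_map_poly[OF rhom_poly_eval] rhom_poly_eval])
  hence "rhom (\<lambda>F. poly (map_poly (\<lambda>c. poly (map_poly (\<lambda>e. poly e a0) c) a1) F) a2)"
    by (rule rhom_comp[OF rhom_map_poly rhom_poly_eval])
  thus ?thesis unfolding eval3_def .
qed

lemmas eval3_hom = rhomD[OF rhom_eval3]

lemma eval3_power: "eval3 ((F::'a::comm_ring_1 poly3) ^ n) a0 a1 a2 = eval3 F a0 a1 a2 ^ n"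
  by (simp add: rhom_power[OF rhom_eval3])

lemma rhom_map3: assumes "rhom f" shows "rhom (map3 f)"
  unfolding map3_def[abs_def]
  by (intro rhom_map_poly assms)

lemma eval3_map: assumes "rhom \<phi>"
  shows "\<phi> (eval3 F a0 a1 a2) = eval3 (map3 \<phi> F) (\<phi> a0) (\<phi> a1) (\<phi> a2)"
proof -
  note h = rhomD[OF assms]
  have h0: "\<phi> (poly e a0) = poly (map_poly \<phi> e) (\<phi> a0)" for e
    by (rule rhom_poly[OF assms])
  have h1: "\<phi> (poly (map_poly (\<lambda>e. poly e a0) c) a1) =
     poly (map_poly (\<lambda>e. poly e (\<phi> a0)) (map_poly (map_poly \<phi>) c)) (\<phi> a1)" for c
    by (simp add: rhom_poly[OF assms] map_poly_map_poly h o_def h0)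
  show ?thesis
    unfolding eval3_def map3_def
    by (simp add: rhom_poly[OF assms] map_poly_map_poly h o_def h1)
qed



definition derivl :: "('a::comm_ring_1 \<Rightarrow> 'a) \<Rightarrow> bool" where
  "derivl D \<longleftrightarrow> D 0 = 0 \<and> (\<forall>x y. D (x + y) = D x + D y) \<and> (\<forall>x y. D (x * y) = x * D y + y * D x)"

lemma derivlD: assumes "derivl D"
  shows "D 0 = 0" "D (x + y) = D x + D y" "D (x * y) = x * D y + y * D x"
  using assms unfolding derivl_def by auto

lemma derivl_sum: assumes "derivl D" shows "D (sum g A) = (\<Sum>x\<in>A. D (g x))"
  by (induction A rule: infinite_finite_induct) (simp_all add: derivlD[OF assms])

lemma derivl_pderiv: "derivl pderiv"
  unfolding derivl_def by (simp add: pderiv_add pderiv_mult)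

lemma derivl_map_poly: assumes "derivl D" shows "derivl (map_poly D)"
proof -
  note h = derivlD[OF assms]
  have "map_poly D (x * y) = x * map_poly D y + map_poly D x * y" for x y
  proof (rule poly_eqI)
    fix n
    have h3: "D (a * b) = a * D b + D a * b" for a b using h(3)[of a b] by (simp add: mult.commute)
    show "coeff (map_poly D (x * y)) n = coeff (x * map_poly D y + map_poly D x * y) n"
      by (simp add: coeff_map_poly h(1) coeff_mult derivl_sum[OF assms] sum.distrib h3)
  qed
  hence "map_poly D (x * y) = x * map_poly D y + y * map_poly D x" for x y
    by (simp add: mult.commute)
  moreover have "map_poly D (x + y) = map_poly D x + map_poly D y" for x y
    by (rule poly_eqI) (simp add: coeff_map_poly h)
  ultimately show ?thesis unfolding derivl_def by simp
qed

lemma derivl_pd0: "derivl pd0"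
  unfolding pd0_def[abs_def] by (intro derivl_map_poly derivl_pderiv)
lemma derivl_pd1: "derivl pd1"
  unfolding pd1_def[abs_def] by (intro derivl_map_poly derivl_pderiv)
lemma derivl_pd2: "derivl pd2"
  unfolding pd2_def[abs_def] by (intro derivl_map_poly derivl_pderiv)

lemma eval3_pd_mult:
  assumes "derivl D"
  shows "eval3 (D (A * B)) a0 a1 a2 = eval3 A a0 a1 a2 * eval3 (D B) a0 a1 a2 + eval3 B a0 a1 a2 * eval3 (D A) a0 a1 a2"
  by (simp add: derivlD[OF assms] eval3_hom)

lemma map_poly_pderiv_comm: assumes "rhom f"
  shows "map_poly f (pderiv p) = pderiv (map_poly f p)"
  by (rule poly_eqI) (simp add: coeff_map_poly coeff_pderiv rhomD[OF assms] rhom_of_nat[OF assms])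

lemma map3_pd2: assumes "rhom f" shows "map3 f (pd2 F) = pd2 (map3 f F)"
  unfolding map3_def pd2_def
  by (intro map_poly_pderiv_comm rhom_map_poly assms)

lemma map3_pd1: assumes "rhom f" shows "map3 f (pd1 F) = pd1 (map3 f F)"
proof -
  have r: "rhom (map_poly f)" by (rule rhom_map_poly[OF assms])
  show ?thesis
    unfolding map3_def pd1_def
    by (simp add: map_poly_map_poly o_def map_poly_pderiv_comm[OF r] rhomD[OF r])
qed

lemma map3_pd0: assumes "rhom f" shows "map3 f (pd0 F) = pd0 (map3 f F)"
  unfolding map3_def pd0_def
  by (simp add: map_poly_map_poly o_def map_poly_pderiv_comm[OF assms] rhomD[OF assms])

lemma map3_X: assumes "rhom f" shows "map3 f X0 = X0" "map3 f X1 = X1" "map3 f X2 = X2"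
  unfolding map3_def X0_def X1_def X2_def by (simp_all add: rhomD[OF assms] map_poly_pCons)

lemma eval3_X: "eval3 X0 a0 a1 a2 = a0" "eval3 X1 a0 a1 a2 = a1" "eval3 X2 a0 a1 a2 = a2"
  unfolding eval3_def X0_def X1_def X2_def by (simp_all add: map_poly_pCons)



definition monom3 :: "'a::zero \<Rightarrow> nat \<Rightarrow> nat \<Rightarrow> nat \<Rightarrow> 'a poly3" where
  "monom3 c i j k = monom (monom (monom c i) j) k"

definition const3 :: "'a::zero \<Rightarrow> 'a poly3" where "const3 c = [:[:[:c:]:]:]"

lemma coeff3_monom3: "coeff3 (monom3 c i j k) i' j' k' = (if i = i' \<and> j = j' \<and> k = k' then c else 0)"
  unfolding coeff3_def monom3_def by (auto simp: coeff_monom)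

lemma monom3_0 [simp]: "monom3 0 i j k = 0"
  unfolding monom3_def by simp

lemma coeff3_const3: "coeff3 (const3 c) i j k = (if i = 0 \<and> j = 0 \<and> k = 0 then c else 0)"
  unfolding coeff3_def const3_def by (auto simp: coeff_pCons split: nat.split)

lemma poly3_eqI: assumes "\<And>i j k. coeff3 A i j k = coeff3 B i j k" shows "A = B"
  using assms unfolding coeff3_def by (intro poly_eqI) auto

lemma coeff3_add: "coeff3 (A + B) i j k = coeff3 A i j k + coeff3 B i j k"
  unfolding coeff3_def by simp

lemma coeff3_sum: "coeff3 (sum f S) i j k = (\<Sum>x\<in>S. coeff3 (f x) i j k)"
  unfolding coeff3_def by (simp add: coeff_sum)

lemma coeff3_map3: assumes "f 0 = 0" shows "coeff3 (map3 f F) i j k = f (coeff3 F i j k)"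
  unfolding coeff3_def map3_def by (simp add: coeff_map_poly assms)

lemma degree_bound3:
  fixes F :: "'a::zero poly3"
  shows "\<exists>N. degree F \<le> N \<and> (\<forall>k. degree (coeff F k) \<le> N) \<and> (\<forall>k j. degree (coeff (coeff F k) j) \<le> N)"
proof -
  define N where "N = degree F + (\<Sum>k\<le>degree F. degree (coeff F k)) +
     (\<Sum>k\<le>degree F. \<Sum>j\<le>degree (coeff F k). degree (coeff (coeff F k) j))"
  have 1: "degree (coeff F k) \<le> N" for k
  proof (cases "k \<le> degree F")
    case True
    have "degree (coeff F k) \<le> (\<Sum>k\<le>degree F. degree (coeff F k))"
      by (rule member_le_sum) (use True in auto)
    thus ?thesis unfolding N_def by linarith
  next
    case False thus ?thesis by (simp add: coeff_eq_0)
  qed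
  have 2: "degree (coeff (coeff F k) j) \<le> N" for k j
  proof (cases "k \<le> degree F \<and> j \<le> degree (coeff F k)")
    case True
    have "degree (coeff (coeff F k) j) \<le> (\<Sum>j\<le>degree (coeff F k). degree (coeff (coeff F k) j))"
      by (rule member_le_sum) (use True in auto)
    also have "\<dots> \<le> (\<Sum>k\<le>degree F. \<Sum>j\<le>degree (coeff F k). degree (coeff (coeff F k) j))"
      by (rule member_le_sum[where f = "\<lambda>k. \<Sum>j\<le>degree (coeff F k). degree (coeff (coeff F k) j)"]) (use True in auto)
    finally show ?thesis unfolding N_def by linarith
  next
    case False thus ?thesis by (auto simp: coeff_eq_0)
  qed
  show ?thesis using 1 2 by (intro exI[of _ N]) (auto simp: N_def)
qed

lemma expand3:
  fixes F :: "'a::comm_monoid_add poly3"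
  shows "\<exists>N. \<forall>M\<ge>N. F = (\<Sum>k\<le>M. \<Sum>j\<le>M. \<Sum>i\<le>M. monom3 (coeff3 F i j k) i j k)"
proof -
  obtain N where N: "degree F \<le> N" "\<And>k. degree (coeff F k) \<le> N" "\<And>k j. degree (coeff (coeff F k) j) \<le> N"
    using degree_bound3[of F] by blast
  have "F = (\<Sum>k\<le>M. \<Sum>j\<le>M. \<Sum>i\<le>M. monom3 (coeff3 F i j k) i j k)" if "M \<ge> N" for M
  proof -
    have a: "coeff (coeff F k) j = (\<Sum>i\<le>M. monom (coeff3 F i j k) i)" for k j
      unfolding coeff3_def by (rule poly_as_sum_of_monoms'[symmetric]) (use N(3)[of k j] that in linarith)
    have b: "coeff F k = (\<Sum>j\<le>M. monom (coeff (coeff F k) j) j)" for k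
      by (rule poly_as_sum_of_monoms'[symmetric]) (use N(2)[of k] that in linarith)
    have c: "F = (\<Sum>k\<le>M. monom (coeff F k) k)"
      by (rule poly_as_sum_of_monoms'[symmetric]) (use N(1) that in linarith)
    have b': "coeff F k = (\<Sum>j\<le>M. monom (\<Sum>i\<le>M. monom (coeff3 F i j k) i) j)" for k
    proof -
      have "coeff F k = (\<Sum>j\<le>M. monom (coeff (coeff F k) j) j)" by (rule b)
      also have "\<dots> = (\<Sum>j\<le>M. monom (\<Sum>i\<le>M. monom (coeff3 F i j k) i) j)" by (simp only: a)
      finally show ?thesis .
    qed
    have "F = (\<Sum>k\<le>M. monom (coeff F k) k)" by (rule c)
    also have "\<dots> = (\<Sum>k\<le>M. monom (\<Sum>j\<le>M. monom (\<Sum>i\<le>M. monom (coeff3 F i j k) i) j) k)"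
      by (simp only: b')
    also have "\<dots> = (\<Sum>k\<le>M. \<Sum>j\<le>M. \<Sum>i\<le>M. monom3 (coeff3 F i j k) i j k)"
      by (simp add: monom_sum monom3_def)
    finally show ?thesis .
  qed
  thus ?thesis by blast
qed

lemma additive_expand:
  fixes E :: "'a::comm_monoid_add poly3 \<Rightarrow> 'b::comm_monoid_add"
  assumes E0: "E 0 = 0" and Eadd: "\<And>x y. E (x + y) = E x + E y"
    and Emon: "\<And>i j k. E (monom3 (coeff3 F i j k) i j k) = 0"
  shows "E F = 0"
proof -
  have Es: "E (sum g A) = (\<Sum>x\<in>A. E (g x))" for g :: "_ \<Rightarrow> 'a poly3" and A :: "'c set"
    by (induction A rule: infinite_finite_induct) (simp_all add: E0 Eadd)
  obtain N where "\<forall>M\<ge>N. F = (\<Sum>k\<le>M. \<Sum>j\<le>M. \<Sum>i\<le>M. monom3 (coeff3 F i j k) i j k)"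
    using expand3[of F] by blast
  hence "F = (\<Sum>k\<le>N. \<Sum>j\<le>N. \<Sum>i\<le>N. monom3 (coeff3 F i j k) i j k)" by blast
  hence "E F = E (\<Sum>k\<le>N. \<Sum>j\<le>N. \<Sum>i\<le>N. monom3 (coeff3 F i j k) i j k)" by simp
  also have "\<dots> = 0" by (simp add: Es Emon)
  finally show ?thesis .
qed

lemma eval3_monom3: "eval3 (monom3 (c::'a::comm_semiring_1) i j k) a0 a1 a2 = c * a0 ^ i * a1 ^ j * a2 ^ k"
  unfolding eval3_def monom3_def by (simp add: map_poly_monom poly_monom mult.assoc)

lemma of_nat_mult_monom: "(of_nat n :: 'a::comm_semiring_1 poly) * monom c i = monom (of_nat n * c) i"
  by (simp add: of_nat_poly smult_monom)

lemma pd0_monom3: "pd0 (monom3 c i j k) = monom3 (of_nat i * c) (i - 1) j k"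
  unfolding pd0_def monom3_def by (simp add: map_poly_monom pderiv_monom)
lemma pd1_monom3: "pd1 (monom3 c i j k) = monom3 (of_nat j * c) i (j - 1) k"
  unfolding pd1_def monom3_def by (simp add: map_poly_monom pderiv_monom of_nat_mult_monom)
lemma pd2_monom3: "pd2 (monom3 c i j k) = monom3 (of_nat k * c) i j (k - 1)"
  unfolding pd2_def monom3_def by (simp add: map_poly_monom pderiv_monom of_nat_mult_monom)

lemma pow_pred: "(a::'a::comm_semiring_1) * (of_nat i * c * a ^ (i - 1)) = of_nat i * c * a ^ i"
  by (cases i) (simp_all add: algebra_simps)

lemma euler:
  fixes F :: "'a::idom poly3"
  assumes hom: "homogeneous3 F d"
  shows "a0 * eval3 (pd0 F) a0 a1 a2 + a1 * eval3 (pd1 F) a0 a1 a2 + a2 * eval3 (pd2 F) a0 a1 a2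
         = of_nat d * eval3 F a0 a1 a2"
proof -
  define E where "E G = a0 * eval3 (pd0 G) a0 a1 a2 + a1 * eval3 (pd1 G) a0 a1 a2 + a2 * eval3 (pd2 G) a0 a1 a2
         - of_nat d * eval3 G a0 a1 a2" for G
  have "E F = 0"
  proof (rule additive_expand)
    show "E 0 = 0" by (simp add: E_def derivlD[OF derivl_pd0] derivlD[OF derivl_pd1] derivlD[OF derivl_pd2] eval3_hom)
    show "E (x + y) = E x + E y" for x y
      by (simp add: E_def derivlD[OF derivl_pd0] derivlD[OF derivl_pd1] derivlD[OF derivl_pd2] eval3_hom algebra_simps)
    fix i j k
    show "E (monom3 (coeff3 F i j k) i j k) = 0"
    proof (cases "coeff3 F i j k = 0")
      case True thus ?thesis by (simp add: E_def derivlD[OF derivl_pd0] derivlD[OF derivl_pd1] derivlD[OF derivl_pd2] eval3_hom)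
    next
      case False
      with hom have d: "d = i + j + k" unfolding homogeneous3_def by auto
      define c where "c = coeff3 F i j k"
      have f0: "a0 * (of_nat i * c * a0 ^ (i - 1) * a1 ^ j * a2 ^ k) = of_nat i * c * a0 ^ i * a1 ^ j * a2 ^ k"
        using arg_cong[OF pow_pred[of a0 i c], of "\<lambda>z. z * a1 ^ j * a2 ^ k"] by (simp only: ac_simps)
      have f1: "a1 * (of_nat j * c * a0 ^ i * a1 ^ (j - 1) * a2 ^ k) = of_nat j * c * a0 ^ i * a1 ^ j * a2 ^ k"
        using arg_cong[OF pow_pred[of a1 j c], of "\<lambda>z. z * a0 ^ i * a2 ^ k"] by (simp only: ac_simps)
      have f2: "a2 * (of_nat k * c * a0 ^ i * a1 ^ j * a2 ^ (k - 1)) = of_nat k * c * a0 ^ i * a1 ^ j * a2 ^ k"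
        using arg_cong[OF pow_pred[of a2 k c], of "\<lambda>z. z * a0 ^ i * a1 ^ j"] by (simp only: ac_simps)
      show ?thesis
        unfolding E_def c_def[symmetric] pd0_monom3 pd1_monom3 pd2_monom3 eval3_monom3 d f0 f1 f2
        by (simp only: of_nat_add distrib_right ac_simps) (simp add: algebra_simps)
    qed
  qed
  thus ?thesis by (simp add: E_def)
qed

lemma scaling:
  fixes G :: "'a::idom poly3"
  assumes hom: "homogeneous3 G e"
  shows "eval3 G (t * a0) (t * a1) (t * a2) = t ^ e * eval3 G a0 a1 a2"
proof -
  define E where "E H = eval3 H (t * a0) (t * a1) (t * a2) - t ^ e * eval3 H a0 a1 a2" for H
  have "E G = 0"
  proof (rule additive_expand)
    show "E 0 = 0" by (simp add: E_def eval3_hom)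
    show "E (x + y) = E x + E y" for x y by (simp add: E_def eval3_hom algebra_simps)
    fix i j k
    show "E (monom3 (coeff3 G i j k) i j k) = 0"
    proof (cases "coeff3 G i j k = 0")
      case True thus ?thesis by (simp add: E_def eval3_hom)
    next
      case False
      with hom have d: "e = i + j + k" unfolding homogeneous3_def by auto
      show ?thesis unfolding E_def eval3_monom3 d by (simp add: power_mult_distrib power_add algebra_simps)
    qed
  qed
  thus ?thesis by (simp add: E_def)
qed



lemma rhom_const3: "rhom (const3 :: 'a::comm_ring_1 \<Rightarrow> 'a poly3)"
  unfolding const3_def[abs_def]
  by (intro rhom_comp[OF rhom_comp[OF rhom_const rhom_const] rhom_const] )

definition cstS :: "'a::comm_ring_1 \<Rightarrow> 'a poly3 poly" where "cstS c = [:const3 c:]"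

lemma rhom_cstS: "rhom (cstS :: 'a::comm_ring_1 \<Rightarrow> _)"
  unfolding cstS_def[abs_def] by (rule rhom_comp[OF rhom_const3 rhom_const])

definition Phi :: "'a::comm_ring_1 poly3 \<Rightarrow> 'a poly3 poly" where
  "Phi G = eval3 (map3 cstS G) [:0, X0:] [:0, X1:] [:0, X2:]"

lemma rhom_Phi: "rhom (Phi :: 'a::comm_ring_1 poly3 \<Rightarrow> _)"
  unfolding Phi_def[abs_def] by (rule rhom_comp[OF rhom_map3[OF rhom_cstS] rhom_eval3])

lemma monom3_mult: "monom3 (a::'a::comm_semiring_1) i j k * monom3 b i' j' k' = monom3 (a * b) (i + i') (j + j') (k + k')"
  unfolding monom3_def by (simp add: mult_monom)

lemma monom3_power: "monom3 (a::'a::comm_semiring_1) i j k ^ n = monom3 (a ^ n) (i * n) (j * n) (k * n)"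
  by (induction n) (simp_all add: monom3_mult, simp add: monom3_def monom_0 one_pCons)

lemma X_monom3: "X0 = monom3 (1::'a::comm_ring_1) 1 0 0" "X1 = monom3 (1::'a) 0 1 0" "X2 = monom3 (1::'a) 0 0 1"
  unfolding X0_def X1_def X2_def monom3_def by (simp_all add: monom_0 monom_Suc one_pCons)

lemma const3_monom3: "const3 c = monom3 c 0 0 0"
  unfolding const3_def monom3_def by (simp add: monom_0)

lemma monom3_as_prod: "monom3 (c::'a::comm_ring_1) i j k = const3 c * X0 ^ i * X1 ^ j * X2 ^ k"
  unfolding X_monom3 const3_monom3 by (simp add: monom3_power monom3_mult)

lemma map3_monom3: assumes "f 0 = 0" shows "map3 f (monom3 c i j k) = monom3 (f c) i j k"
  unfolding map3_def monom3_def by (simp add: map_poly_monom assms)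

lemma Phi_monom3: "Phi (monom3 (c::'a::comm_ring_1) i j k) = monom (monom3 c i j k) (i + j + k)"
proof -
  have m: "[:0, a:] = monom a 1" for a :: "'a poly3" by (simp add: monom_Suc monom_0)
  have "Phi (monom3 c i j k) = cstS c * [:0, X0:] ^ i * [:0, X1:] ^ j * [:0, X2:] ^ k"
    unfolding Phi_def by (simp add: map3_monom3 rhomD[OF rhom_cstS] eval3_monom3)
  also have "\<dots> = monom (const3 c * X0 ^ i * X1 ^ j * X2 ^ k) (i + j + k)"
    unfolding m cstS_def monom_power by (simp add: monom_0[symmetric] mult_monom)
  finally show ?thesis by (simp add: monom3_as_prod)
qed

lemma sum_if_const: "(\<Sum>x\<in>A. if P then f x else 0) = (if P then sum f A else 0)"
  by auto

lemma sum_single: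
  assumes "finite A" "i \<in> A" "\<And>x. x \<in> A \<Longrightarrow> x \<noteq> i \<Longrightarrow> f x = 0"
  shows "sum f A = f i"
proof -
  have "sum f A = f i + sum f (A - {i})" by (rule sum.remove[OF assms(1,2)])
  also have "sum f (A - {i}) = 0" by (rule sum.neutral) (use assms(3) in auto)
  finally show ?thesis by simp
qed

lemma triple_delta:
  assumes "i \<le> (M::nat)" "j \<le> M" "k \<le> M"
    and z: "\<And>i' j' k'. \<not> (i' = i \<and> j' = j \<and> k' = k) \<Longrightarrow> g i' j' k' = (0::'a::comm_monoid_add)"
  shows "(\<Sum>k'\<le>M. \<Sum>j'\<le>M. \<Sum>i'\<le>M. g i' j' k') = g i j k"
proof -
  have 1: "(\<Sum>i'\<le>M. g i' j' k') = (if j' = j \<and> k' = k then g i j k else 0)" for j' k'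
  proof (cases "j' = j \<and> k' = k")
    case True thus ?thesis using assms by (auto intro!: sum_single)
  next
    case False thus ?thesis using z by (auto intro!: sum.neutral)
  qed
  have 2: "(\<Sum>j'\<le>M. \<Sum>i'\<le>M. g i' j' k') = (if k' = k then g i j k else 0)" for k'
    unfolding 1 by (cases "k' = k") (use assms in \<open>auto intro!: sum_single\<close>)
  show ?thesis
    unfolding 2 using assms by (subst sum_single[of _ k]) auto
qed

lemma coeff3_zero [simp]: "coeff3 0 i j k = 0"
  unfolding coeff3_def by simp

lemma coeff_Phi:
  fixes G :: "'a::comm_ring_1 poly3"
  shows "coeff3 (coeff (Phi G) n) i j k = (if i + j + k = n then coeff3 G i j k else 0)"
proof -
  obtain N where N: "\<forall>M\<ge>N. G = (\<Sum>k\<le>M. \<Sum>j\<le>M. \<Sum>i\<le>M. monom3 (coeff3 G i j k) i j k)"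
    using expand3[of G] by blast
  define M where "M = N + i + j + k"
  have G: "G = (\<Sum>k\<le>M. \<Sum>j\<le>M. \<Sum>i\<le>M. monom3 (coeff3 G i j k) i j k)"
    using N M_def by auto
  define g where "g i' j' k' = coeff3 (coeff (monom (monom3 (coeff3 G i' j' k') i' j' k') (i' + j' + k')) n) i j k" for i' j' k'
  have "coeff3 (coeff (Phi G) n) i j k = (\<Sum>k'\<le>M. \<Sum>j'\<le>M. \<Sum>i'\<le>M. g i' j' k')"
    unfolding g_def by (subst G) (simp add: rhom_sum[OF rhom_Phi] Phi_monom3 coeff_sum coeff3_sum)
  also have "\<dots> = g i j k"
    by (rule triple_delta) (auto simp: M_def g_def coeff_monom coeff3_monom3)
  also have "\<dots> = (if i + j + k = n then coeff3 G i j k else 0)"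
    by (simp add: g_def coeff_monom coeff3_monom3)
  finally show ?thesis .
qed



lemma X_pow_eval0: "poly ([:0, 1:] ^ n) (0::'a::comm_ring_1) = (if n = 0 then 1 else 0)"
  by (simp add: poly_power power_0_left)

lemma monom_dvd_monom:
  fixes p q :: "'a::idom poly"
  assumes pq: "p * q = monom c d" and c: "c \<noteq> 0"
  shows "\<exists>a e. p = monom a e"
proof -
  have p0: "p \<noteq> 0" and q0: "q \<noteq> 0" using pq c by auto
  obtain r where r: "p = [:0, 1:] ^ order 0 p * r" "\<not> [:0, 1:] dvd r"
    using order_decomp[OF p0, of 0] by auto
  obtain s where s: "q = [:0, 1:] ^ order 0 q * s" "\<not> [:0, 1:] dvd s"
    using order_decomp[OF q0, of 0] by auto
  have r0: "poly r 0 \<noteq> 0" using r(2) dvd_iff_poly_eq_0[of 0 r] by simp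
  have s0: "poly s 0 \<noteq> 0" using s(2) dvd_iff_poly_eq_0[of 0 s] by simp
  define a where "a = order 0 p"
  define b where "b = order 0 q"
  have X0: "[:0, 1::'a:] ^ n \<noteq> 0" for n by simp
  have eq: "[:0, 1:] ^ (a + b) * (r * s) = [:0, 1:] ^ d * [:c:]"
  proof -
    have "[:0, 1:] ^ (a + b) * (r * s) = p * q"
      by (subst r(1), subst s(1)) (simp add: a_def b_def power_add algebra_simps)
    also have "\<dots> = [:0, 1:] ^ d * [:c:]" by (simp add: pq monom_altdef)
    finally show ?thesis .
  qed
  show ?thesis
  proof (cases "a + b \<le> d")
    case True
    have "[:0, 1:] ^ (a + b) * (r * s) = [:0, 1:] ^ (a + b) * ([:0, 1:] ^ (d - (a + b)) * [:c:])"
      using eq True by (simp add: power_add[symmetric] mult.assoc[symmetric])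
    hence rs: "r * s = [:0, 1:] ^ (d - (a + b)) * [:c:]" by (metis X0 mult_left_cancel)
    have "poly (r * s) 0 \<noteq> 0" using r0 s0 by simp
    hence "d - (a + b) = 0" using rs by (auto simp: X_pow_eval0 split: if_splits)
    hence "r * s = [:c:]" using rs by simp
    hence "degree r + degree s = 0" using degree_mult_eq[of r s] r0 s0 by fastforce
    hence "degree r = 0" by simp
    hence "r = [:coeff r 0:]" by (intro poly_eqI) (auto simp: coeff_pCons coeff_eq_0 split: nat.split)
    hence "p = monom (coeff r 0) a"
      by (subst r(1)) (metis a_def monom_altdef mult.commute mult_smult_left mult_1 smult_one)
    thus ?thesis by blast
  next
    case False
    have "[:0, 1:] ^ d * ([:0, 1:] ^ (a + b - d) * (r * s)) = [:0, 1:] ^ d * [:c:]"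
      using eq False by (simp add: power_add[symmetric] mult.assoc[symmetric])
    hence "[:0, 1:] ^ (a + b - d) * (r * s) = [:c:]" by (metis X0 mult_left_cancel)
    hence "poly ([:0, 1:] ^ (a + b - d) * (r * s)) 0 = c" by simp
    hence "c = 0" using False by (simp add: power_0_left)
    thus ?thesis using c by simp
  qed
qed

lemma Phi_homogeneous:
  fixes F :: "'a::comm_ring_1 poly3"
  assumes "homogeneous3 F d"
  shows "Phi F = monom F d"
proof (rule poly_eqI)
  fix n
  show "coeff (Phi F) n = coeff (monom F d) n"
  proof (rule poly3_eqI)
    fix i j k
    show "coeff3 (coeff (Phi F) n) i j k = coeff3 (coeff (monom F d) n) i j k"
      using assms unfolding coeff_Phi homogeneous3_def by (auto simp: coeff_monom)
  qed
qed

lemma homogeneous_factor: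
  fixes F G H :: "'a::idom poly3"
  assumes hom: "homogeneous3 F d" and F0: "F \<noteq> 0" and FGH: "F = G * H"
  shows "\<exists>e. homogeneous3 G e"
proof -
  have "Phi G * Phi H = monom F d"
    using Phi_homogeneous[OF hom] FGH rhomD(4)[OF rhom_Phi, of G H] by simp
  then obtain a e where a: "Phi G = monom a e" using monom_dvd_monom F0 by blast
  have "homogeneous3 G e"
    unfolding homogeneous3_def
  proof (intro allI impI)
    fix i j k assume "coeff3 G i j k \<noteq> 0"
    hence "coeff3 (coeff (Phi G) (i + j + k)) i j k \<noteq> 0" by (simp add: coeff_Phi)
    hence "coeff (Phi G) (i + j + k) \<noteq> 0" by auto
    thus "i + j + k = e" using a by (auto simp: coeff_monom split: if_splits)
  qed
  thus ?thesis by blast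
qed

lemma homogeneous0_const:
  assumes "homogeneous3 G 0"
  shows "G = const3 (coeff3 G 0 0 0)"
proof (rule poly3_eqI)
  fix i j k
  show "coeff3 G i j k = coeff3 (const3 (coeff3 G 0 0 0)) i j k"
    using assms unfolding homogeneous3_def coeff3_const3 by (cases "coeff3 G i j k = 0") auto
qed

lemma is_unit_const3: "(c::'a::field) \<noteq> 0 \<Longrightarrow> is_unit (const3 c)"
  unfolding const3_def by (simp add: is_unit_const_poly_iff dvd_field_iff)



lemma alg_closed_infinite: "infinite (UNIV :: 'a::alg_closed_field set)"
proof
  assume fin: "finite (UNIV :: 'a set)"
  define P :: "'a poly" where "P = (\<Prod>a\<in>UNIV. [:-a, 1:])"
  have dP: "degree P = card (UNIV :: 'a set)"
    unfolding P_def by (subst degree_prod_sum_eq) auto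
  have "card (UNIV :: 'a set) > 0" using fin by (simp add: finite_UNIV_card_ge_0)
  hence "degree ([:1:] + P) > 0" using dP by (subst degree_add_eq_right) auto
  then obtain x where "poly ([:1:] + P) x = 0" using alg_closed_imp_poly_has_root by blast
  moreover have "poly P x = 0" unfolding P_def poly_prod using fin
    by (intro prod_zero) auto
  ultimately show False by simp
qed

lemma card_ff_ge2: "card (UNIV :: 'a::finite_field set) \<ge> 2"
proof -
  have "card {0, 1 :: 'a} \<le> card (UNIV :: 'a set)" by (rule card_mono) auto
  thus ?thesis by simp
qed

lemma binom_vanish:
  assumes "0 < k" "k < card (UNIV :: 'a::finite_field set)"
  shows "(of_nat (card (UNIV :: 'a set) choose k) :: 'a) = 0"
proof -
  define q where "q = card (UNIV :: 'a set)"
  define P :: "'a poly" where "P = [:1, 1:] ^ q - monom 1 q - 1"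
  have roots: "poly P x = 0" for x
    unfolding P_def q_def by (simp add: poly_monom finite_field_power_card_eq_same add.commute)
  have q2: "q \<ge> 2" using card_ff_ge2 unfolding q_def by simp
  have P0: "P = 0"
  proof (rule ccontr)
    assume "P \<noteq> 0"
    hence "card {x. poly P x = 0} \<le> degree P" by (rule card_poly_roots_bound)
    hence cd: "q \<le> degree P" using roots unfolding q_def by simp
    have "degree P \<le> q" unfolding P_def
      by (intro degree_diff_le degree_diff_le) (auto simp: degree_linear_power degree_monom_le)
    moreover have "coeff P q = 0" unfolding P_def using q2
      by (simp add: coeff_linear_poly_power coeff_monom)
    ultimately have "degree P < q" using \<open>P \<noteq> 0\<close>
      by (metis le_neq_implies_less leading_coeff_0_iff)
    thus False using cd by simp
  qed
  have "coeff P k = of_nat (q choose k)" unfolding P_def using assms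
    by (simp add: coeff_linear_poly_power coeff_monom q_def)
  thus ?thesis using P0 unfolding q_def by simp
qed

definition frob :: "'a::finite_field alg_closure \<Rightarrow> 'a alg_closure" where
  "frob x = x ^ card (UNIV :: 'a set)"

lemma frob_add: "frob (x + y) = frob x + frob (y :: 'a::finite_field alg_closure)"
proof -
  define q where "q = card (UNIV :: 'a set)"
  have q0: "q > 0" using card_ff_ge2[where 'a='a] unfolding q_def by simp
  have "(x + y) ^ q = (\<Sum>k\<le>q. of_nat (q choose k) * x ^ k * y ^ (q - k))"
    by (rule binomial_ring)
  also have "\<dots> = (\<Sum>k\<in>{0, q}. of_nat (q choose k) * x ^ k * y ^ (q - k))"
  proof (intro sum.mono_neutral_right ballI)
    fix k assume "k \<in> {..q} - {0, q}"
    hence k: "0 < k" "k < q" by auto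
    have "(of_nat (q choose k) :: 'a alg_closure) = to_ac (of_nat (q choose k) :: 'a)" by simp
    also have "\<dots> = 0" using binom_vanish[of k, where 'a='a] k unfolding q_def by simp
    finally show "of_nat (q choose k) * x ^ k * y ^ (q - k) = 0" by simp
  qed auto
  also have "\<dots> = x ^ q + y ^ q" using q0 by (simp add: add.commute)
  finally show ?thesis unfolding frob_def q_def .
qed

lemma rhom_frob: "rhom (frob :: 'a::finite_field alg_closure \<Rightarrow> _)"
proof (rule rhomI)
  have q0: "card (UNIV :: 'a set) > 0" using card_ff_ge2[where 'a='a] by simp
  show "frob 0 = (0 :: 'a alg_closure)" unfolding frob_def using q0 by simp
  show "frob 1 = (1 :: 'a alg_closure)" unfolding frob_def by simp
  show "frob (x + y) = frob x + frob y" for x y :: "'a alg_closure" by (rule frob_add)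
  show "frob (x * y) = frob x * frob y" for x y :: "'a alg_closure" unfolding frob_def by (simp add: power_mult_distrib)
qed

lemma frob_to_ac [simp]: "frob (to_ac (a :: 'a::finite_field)) = to_ac a"
  unfolding frob_def by (simp flip: to_ac_power add: finite_field_power_card_eq_same)

lemma frob_fixed_iff: "frob x = x \<longleftrightarrow> x \<in> range (to_ac :: 'a::finite_field \<Rightarrow> _)"
proof
  assume "x \<in> range (to_ac :: 'a \<Rightarrow> _)" thus "frob x = x" by auto
next
  assume fx: "frob x = x"
  define q where "q = card (UNIV :: 'a set)"
  have q2: "q \<ge> 2" using card_ff_ge2[where 'a='a] unfolding q_def by simp
  define P :: "'a alg_closure poly" where "P = monom 1 q - [:0, 1:]"
  have cq: "coeff P q = 1" unfolding P_def using q2 by (simp add: coeff_monom coeff_pCons split: nat.split)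
  hence P0: "P \<noteq> 0" by auto
  have dP: "degree P = q"
  proof (rule antisym)
    show "degree P \<le> q" unfolding P_def using q2
      by (intro degree_diff_le) (auto simp: degree_monom_le)
    show "q \<le> degree P" using cq by (intro le_degree) simp
  qed
  let ?R = "{x. poly P x = 0}"
  have sub: "range (to_ac :: 'a \<Rightarrow> _) \<subseteq> ?R"
  proof
    fix y assume "y \<in> range (to_ac :: 'a \<Rightarrow> _)"
    then obtain a :: 'a where "y = to_ac a" by auto
    hence "frob y = y" by simp
    thus "y \<in> ?R" unfolding P_def frob_def q_def by (simp add: poly_monom)
  qed
  have finR: "finite ?R" by (rule poly_roots_finite[OF P0])
  have "card ?R \<le> q" using card_poly_roots_bound[OF P0] dP by simp
  moreover have "card (range (to_ac :: 'a \<Rightarrow> _)) = q"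
    unfolding q_def by (simp add: card_image inj_to_ac)
  ultimately have "range (to_ac :: 'a \<Rightarrow> _) = ?R"
    using card_subset_eq[OF finR sub] card_mono[OF finR sub] by simp
  moreover have "x \<in> ?R" using fx unfolding P_def frob_def q_def by (simp add: poly_monom)
  ultimately show "x \<in> range (to_ac :: 'a \<Rightarrow> _)" by simp
qed

lemma frob_eq_0_iff [simp]: "frob x = 0 \<longleftrightarrow> (x :: 'a::finite_field alg_closure) = 0"
  unfolding frob_def using card_ff_ge2[where 'a='a] by simp

lemma frob_inj: assumes "frob x = frob y" shows "x = (y :: 'a::finite_field alg_closure)"
proof -
  have "frob (x - y) = 0" using rhom_diff[OF rhom_frob, of x y] assms by simp
  hence "x - y = 0" by (simp only: frob_eq_0_iff)
  thus ?thesis by simp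
qed

lemma frob_surj: "\<exists>y. frob y = (x :: 'a::finite_field alg_closure)"
  unfolding frob_def using card_ff_ge2[where 'a='a] by (intro nth_root_exists) simp

definition frobi :: "'a::finite_field alg_closure \<Rightarrow> 'a alg_closure" where
  "frobi x = (SOME y. frob y = x)"

lemma frob_frobi [simp]: "frob (frobi x) = x"
  unfolding frobi_def by (rule someI_ex[OF frob_surj])

lemma frobi_frob [simp]: "frobi (frob x) = x"
  by (rule frob_inj) (rule frob_frobi)

lemma rhom_frobi: "rhom (frobi :: 'a::finite_field alg_closure \<Rightarrow> _)"
proof (rule rhomI)
  note h = rhomD[OF rhom_frob]
  show "frobi 0 = (0 :: 'a alg_closure)" by (rule frob_inj) (simp add: h)
  show "frobi 1 = (1 :: 'a alg_closure)" by (rule frob_inj) (simp add: h)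
  show "frobi (x + y) = frobi x + frobi y" for x y :: "'a alg_closure"
    by (rule frob_inj) (simp add: h)
  show "frobi (x * y) = frobi x * frobi y" for x y :: "'a alg_closure"
    by (rule frob_inj) (simp add: h)
qed



lemma cross_perp:
  fixes a0 a1 a2 b0 b1 b2 v0 v1 v2 :: "'b::comm_ring_1"
  assumes "v0*a0+v1*a1+v2*a2 = 0" "v0*b0+v1*b1+v2*b2 = 0"
  shows "v1*(a0*b1 - a1*b0) - v2*(a2*b0 - a0*b2) = 0"
        "v2*(a1*b2 - a2*b1) - v0*(a0*b1 - a1*b0) = 0"
        "v0*(a2*b0 - a0*b2) - v1*(a1*b2 - a2*b1) = 0"
proof -
  have "v1*(a0*b1 - a1*b0) - v2*(a2*b0 - a0*b2) = a0*(v0*b0+v1*b1+v2*b2) - b0*(v0*a0+v1*a1+v2*a2)"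
    by (simp add: algebra_simps)
  thus "v1*(a0*b1 - a1*b0) - v2*(a2*b0 - a0*b2) = 0" using assms by simp
  have "v2*(a1*b2 - a2*b1) - v0*(a0*b1 - a1*b0) = a1*(v0*b0+v1*b1+v2*b2) - b1*(v0*a0+v1*a1+v2*a2)"
    by (simp add: algebra_simps)
  thus "v2*(a1*b2 - a2*b1) - v0*(a0*b1 - a1*b0) = 0" using assms by simp
  have "v0*(a2*b0 - a0*b2) - v1*(a1*b2 - a2*b1) = a2*(v0*b0+v1*b1+v2*b2) - b2*(v0*a0+v1*a1+v2*a2)"
    by (simp add: algebra_simps)
  thus "v0*(a2*b0 - a0*b2) - v1*(a1*b2 - a2*b1) = 0" using assms by simp
qed

lemma ratio_helper:
  fixes v w v' w' :: "'b::field"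
  assumes "w \<noteq> 0" "v * w' = v' * w"
  shows "v' = (v / w) * w'"
proof -
  have "(v / w) * w' = (v * w') / w" by simp
  also have "\<dots> = (v' * w) / w" using assms(2) by simp
  also have "\<dots> = v'" using assms(1) by simp
  finally show ?thesis by simp
qed

lemma cross_zero_parallel:
  fixes v0 v1 v2 w0 w1 w2 :: "'b::field"
  assumes "v1*w2 - v2*w1 = 0" "v2*w0 - v0*w2 = 0" "v0*w1 - v1*w0 = 0"
    and "\<not> (w0 = 0 \<and> w1 = 0 \<and> w2 = 0)"
  shows "\<exists>t. v0 = t * w0 \<and> v1 = t * w1 \<and> v2 = t * w2"
proof -
  have e1: "v1*w2 = v2*w1" and e2: "v2*w0 = v0*w2" and e3: "v0*w1 = v1*w0"
    using assms(1-3) by simp_all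
  consider "w0 \<noteq> 0" | "w1 \<noteq> 0" | "w2 \<noteq> 0" using assms(4) by blast
  thus ?thesis
  proof cases
    case 1
    have "v0 = (v0/w0) * w0" "v1 = (v0/w0) * w1" "v2 = (v0/w0) * w2"
      using 1 ratio_helper[OF 1, of v0 w1 v1] ratio_helper[OF 1, of v0 w2 v2] e2 e3 by simp_all
    thus ?thesis by blast
  next
    case 2
    have "v0 = (v1/w1) * w0" "v1 = (v1/w1) * w1" "v2 = (v1/w1) * w2"
      using 2 ratio_helper[OF 2, of v1 w0 v0] ratio_helper[OF 2, of v1 w2 v2] e1 e3 by simp_all
    thus ?thesis by blast
  next
    case 3
    have "v0 = (v2/w2) * w0" "v1 = (v2/w2) * w1" "v2 = (v2/w2) * w2"
      using 3 ratio_helper[OF 3, of v2 w0 v0] ratio_helper[OF 3, of v2 w1 v1] e1 e2 by simp_all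
    thus ?thesis by blast
  qed
qed



lemma tangent_par:
  fixes a0 a1 a2 b0 b1 b2 l0 l1 l2 g0 g1 g2 :: "'b::field"
  assumes w: "\<not> (a1*b2 - a2*b1 = 0 \<and> a2*b0 - a0*b2 = 0 \<and> a0*b1 - a1*b0 = 0)"
    and la: "l0*a0+l1*a1+l2*a2 = 0" and lb: "l0*b0+l1*b1+l2*b2 = 0"
    and ga: "g0*a0+g1*a1+g2*a2 = 0" and gb: "g0*b0+g1*b1+g2*b2 = 0"
    and g: "\<not> (g0 = 0 \<and> g1 = 0 \<and> g2 = 0)"
  shows "\<exists>c. l0 = c * g0 \<and> l1 = c * g1 \<and> l2 = c * g2"
proof -
  obtain \<alpha> where \<alpha>: "l0 = \<alpha> * (a1*b2 - a2*b1)" "l1 = \<alpha> * (a2*b0 - a0*b2)" "l2 = \<alpha> * (a0*b1 - a1*b0)"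
    using cross_zero_parallel[OF cross_perp[OF la lb] w] by blast
  obtain \<beta> where \<beta>: "g0 = \<beta> * (a1*b2 - a2*b1)" "g1 = \<beta> * (a2*b0 - a0*b2)" "g2 = \<beta> * (a0*b1 - a1*b0)"
    using cross_zero_parallel[OF cross_perp[OF ga gb] w] by blast
  have "\<beta> \<noteq> 0" using g \<beta> by auto
  hence "l0 = (\<alpha> / \<beta>) * g0 \<and> l1 = (\<alpha> / \<beta>) * g1 \<and> l2 = (\<alpha> / \<beta>) * g2"
    using \<alpha> \<beta> by simp
  thus ?thesis by blast
qed

lemma frob_divide: "frob (a / b) = frob a / frob (b :: 'a::finite_field alg_closure)"
  unfolding frob_def by (simp add: power_divide)

lemma ratio_rational:
  fixes xi xj :: "'a::finite_field alg_closure"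
  assumes "xi \<noteq> 0" "xi * frob xj = xj * frob xi"
  shows "xj / xi \<in> range (to_ac :: 'a \<Rightarrow> _)"
proof -
  have fi: "frob xi \<noteq> 0" using assms(1) by simp
  have "frob (xj / xi) = frob xj / frob xi" by (rule frob_divide)
  also have "\<dots> = xj / xi" using assms fi by (simp add: field_simps)
  finally show ?thesis using frob_fixed_iff by blast
qed

lemma rational_from_cross:
  fixes x0 x1 x2 :: "'a::finite_field alg_closure"
  assumes nz: "nonzero3 x0 x1 x2"
    and c0: "x1 * frob x2 - x2 * frob x1 = 0" and c1: "x2 * frob x0 - x0 * frob x2 = 0"
    and c2: "x0 * frob x1 - x1 * frob x0 = 0"
  shows "rational_point (to_ac :: 'a \<Rightarrow> _) x0 x1 x2"
proof -
  have e0: "x1 * frob x2 = x2 * frob x1" and e1: "x2 * frob x0 = x0 * frob x2" and e2: "x0 * frob x1 = x1 * frob x0"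
    using c0 c1 c2 by simp_all
  have key: "rational_point (to_ac :: 'a \<Rightarrow> _) x0 x1 x2"
    if "xi \<noteq> 0" "xi * frob x0 = x0 * frob xi" "xi * frob x1 = x1 * frob xi" "xi * frob x2 = x2 * frob xi" for xi
  proof -
    have "(1 / xi) * x0 \<in> range (to_ac :: 'a \<Rightarrow> _)" "(1 / xi) * x1 \<in> range (to_ac :: 'a \<Rightarrow> _)"
         "(1 / xi) * x2 \<in> range (to_ac :: 'a \<Rightarrow> _)"
      using ratio_rational[OF that(1) that(2)] ratio_rational[OF that(1) that(3)] ratio_rational[OF that(1) that(4)]
      by simp_all
    moreover have "1 / xi \<noteq> 0" using that(1) by simp
    ultimately show ?thesis unfolding rational_point_def by blast
  qed
  consider "x0 \<noteq> 0" | "x1 \<noteq> 0" | "x2 \<noteq> 0" using nz unfolding nonzero3_def by blast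
  thus ?thesis
  proof cases
    case 1 thus ?thesis using e0 e1 e2 by (intro key[of x0]) (simp_all add: mult.commute)
  next
    case 2 thus ?thesis using e0 e1 e2 by (intro key[of x1]) (simp_all add: mult.commute)
  next
    case 3 thus ?thesis using e0 e1 e2 by (intro key[of x2]) (simp_all add: mult.commute)
  qed
qed



lemma map3_to_ac_homogeneous:
  "homogeneous3 F d \<Longrightarrow> homogeneous3 (map3 to_ac F) d"
  unfolding homogeneous3_def by (simp add: coeff3_map3)

lemma part1:
  fixes F :: "'a::finite_field poly3"
  assumes hom: "homogeneous3 F d" and fnc: "frobenius_nonclassical F"
    and trans: "transverse (map3 to_ac F) (to_ac l0) (to_ac l1) (to_ac l2)"
    and oc: "on_curve (map3 to_ac F) x0 x1 x2" and ol: "on_line (to_ac l0) (to_ac l1) (to_ac l2) x0 x1 x2"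
  shows "rational_point to_ac x0 x1 x2"
proof -
  define FK where "FK = map3 to_ac F"
  define q where "q = card (UNIV :: 'a set)"
  define g0 where "g0 = eval3 (pd0 FK) x0 x1 x2"
  define g1 where "g1 = eval3 (pd1 FK) x0 x1 x2"
  define g2 where "g2 = eval3 (pd2 FK) x0 x1 x2"
  define L0 where "L0 = (to_ac l0 :: 'a alg_closure)"
  define L1 where "L1 = (to_ac l1 :: 'a alg_closure)"
  define L2 where "L2 = (to_ac l2 :: 'a alg_closure)"
  have homK: "homogeneous3 FK d" unfolding FK_def by (rule map3_to_ac_homogeneous[OF hom])
  have FKx: "eval3 FK x0 x1 x2 = 0" using oc unfolding on_curve_def FK_def by simp
  have nz: "nonzero3 x0 x1 x2" using oc unfolding on_curve_def by simp
  have eul: "g0*x0 + g1*x1 + g2*x2 = 0"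
    using euler[OF homK, of x0 x1 x2] FKx unfolding g0_def g1_def g2_def by (simp add: mult.commute)
  obtain R where R: "X0 ^ q * pd0 F + X1 ^ q * pd1 F + X2 ^ q * pd2 F = F * R"
    using fnc unfolding frobenius_nonclassical_def q_def by (auto elim: dvdE)
  note rK = rhom_map3[OF rhom_to_ac]
  have "map3 to_ac (X0 ^ q * pd0 F + X1 ^ q * pd1 F + X2 ^ q * pd2 F) = map3 to_ac (F * R)"
    using R by simp
  hence RK: "X0 ^ q * pd0 FK + X1 ^ q * pd1 FK + X2 ^ q * pd2 FK = FK * map3 to_ac R"
    unfolding FK_def
    by (simp add: rhomD[OF rK] rhom_power[OF rK] map3_X[OF rhom_to_ac] map3_pd0[OF rhom_to_ac]
        map3_pd1[OF rhom_to_ac] map3_pd2[OF rhom_to_ac])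
  have "eval3 (X0 ^ q * pd0 FK + X1 ^ q * pd1 FK + X2 ^ q * pd2 FK) x0 x1 x2 = 0"
    unfolding RK by (simp add: eval3_hom FKx)
  hence fr: "g0 * frob x0 + g1 * frob x1 + g2 * frob x2 = 0"
    by (simp add: eval3_hom eval3_power eval3_X frob_def q_def g0_def g1_def g2_def mult.commute)
  have lx: "L0*x0 + L1*x1 + L2*x2 = 0" using ol unfolding on_line_def L0_def L1_def L2_def by simp
  have "frob (L0*x0 + L1*x1 + L2*x2) = 0" using lx by (simp add: rhomD[OF rhom_frob])
  hence ly: "L0 * frob x0 + L1 * frob x1 + L2 * frob x2 = 0"
    by (simp add: rhomD[OF rhom_frob] L0_def L1_def L2_def)
  have nsing: "\<not> singular_point FK x0 x1 x2" using trans ol unfolding transverse_def FK_def by blast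
  hence g_nz: "\<not> (g0 = 0 \<and> g1 = 0 \<and> g2 = 0)"
    using oc unfolding singular_point_def g0_def g1_def g2_def FK_def by blast
  have notan: "\<not> tangent_at FK L0 L1 L2 x0 x1 x2" using trans unfolding transverse_def FK_def L0_def L1_def L2_def by blast
  show ?thesis
  proof (cases "x1 * frob x2 - x2 * frob x1 = 0 \<and> x2 * frob x0 - x0 * frob x2 = 0 \<and> x0 * frob x1 - x1 * frob x0 = 0")
    case True thus ?thesis using rational_from_cross[OF nz] by blast
  next
    case False
    obtain c where c: "L0 = c * g0 \<and> L1 = c * g1 \<and> L2 = c * g2"
      using tangent_par[OF False lx ly eul fr g_nz] by blast
    have "tangent_at FK L0 L1 L2 x0 x1 x2"
      unfolding tangent_at_def smooth_point_def
      using oc nsing ol c unfolding FK_def L0_def L1_def L2_def g0_def g1_def g2_def by blast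
    thus ?thesis using notan by blast
  qed
qed



lemma line_basis:
  fixes L0 L1 L2 :: "'b::field"
  assumes "nonzero3 L0 L1 L2"
  shows "\<exists>u0 u1 u2 v0 v1 v2. L0*u0 + L1*u1 + L2*u2 = 0 \<and> L0*v0 + L1*v1 + L2*v2 = 0 \<and>
           nonzero3 v0 v1 v2 \<and> (\<forall>t. nonzero3 (u0 + t*v0) (u1 + t*v1) (u2 + t*v2))"
proof -
  consider "L0 \<noteq> 0" | "L0 = 0" "L1 \<noteq> 0" | "L0 = 0" "L1 = 0" "L2 \<noteq> 0"
    using assms unfolding nonzero3_def by blast
  thus ?thesis
  proof cases
    case 1
    show ?thesis
      by (rule exI[of _ "-L1"], rule exI[of _ L0], rule exI[of _ 0], rule exI[of _ "-L2"], rule exI[of _ 0],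
          rule exI[of _ L0]) (use 1 in \<open>auto simp: nonzero3_def algebra_simps\<close>)
  next
    case 2
    show ?thesis
      by (rule exI[of _ 1], rule exI[of _ 0], rule exI[of _ 0], rule exI[of _ 0], rule exI[of _ "-L2"],
          rule exI[of _ L1]) (use 2 in \<open>auto simp: nonzero3_def algebra_simps\<close>)
  next
    case 3
    show ?thesis
      by (rule exI[of _ 1], rule exI[of _ 0], rule exI[of _ 0], rule exI[of _ 0], rule exI[of _ 1],
          rule exI[of _ 0]) (use 3 in \<open>auto simp: nonzero3_def algebra_simps\<close>)
  qed
qed

definition linepoly :: "'b::comm_ring_1 poly3 \<Rightarrow> 'b \<Rightarrow> 'b \<Rightarrow> 'b \<Rightarrow> 'b \<Rightarrow> 'b \<Rightarrow> 'b \<Rightarrow> 'b poly" where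
  "linepoly G a0 a1 a2 b0 b1 b2 = eval3 (map3 (\<lambda>c. [:c:]) G) [:a0, b0:] [:a1, b1:] [:a2, b2:]"

lemma poly_linepoly:
  "poly (linepoly G a0 a1 a2 b0 b1 b2) t = eval3 G (a0 + t*b0) (a1 + t*b1) (a2 + t*b2)"
proof -
  have "poly (linepoly G a0 a1 a2 b0 b1 b2) t =
     eval3 (map3 (\<lambda>p. poly p t) (map3 (\<lambda>c. [:c:]) G)) (poly [:a0, b0:] t) (poly [:a1, b1:] t) (poly [:a2, b2:] t)"
    unfolding linepoly_def by (rule eval3_map[OF rhom_poly_eval])
  also have "map3 (\<lambda>p. poly p t) (map3 (\<lambda>c. [:c:]) G) = G"
    unfolding map3_def by (simp add: map_poly_map_poly o_def)
  finally show ?thesis by (simp add: mult.commute)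
qed

lemma find_point:
  fixes G :: "'b::alg_closed_field poly3"
  assumes hom: "homogeneous3 G e" and e: "e > 0" and L: "nonzero3 L0 L1 L2"
  shows "\<exists>x0 x1 x2. on_line L0 L1 L2 x0 x1 x2 \<and> eval3 G x0 x1 x2 = 0"
proof -
  obtain u0 u1 u2 v0 v1 v2 where
    lu: "L0*u0 + L1*u1 + L2*u2 = 0" and lv: "L0*v0 + L1*v1 + L2*v2 = 0" and
    vnz: "nonzero3 v0 v1 v2" and unz: "\<And>t. nonzero3 (u0 + t*v0) (u1 + t*v1) (u2 + t*v2)"
    using line_basis[OF L] by blast
  have online: "on_line L0 L1 L2 (u0 + t*v0) (u1 + t*v1) (u2 + t*v2)" for t
  proof -
    have "L0*(u0 + t*v0) + L1*(u1 + t*v1) + L2*(u2 + t*v2) = (L0*u0 + L1*u1 + L2*u2) + t*(L0*v0 + L1*v1 + L2*v2)"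
      by (simp add: algebra_simps)
    thus ?thesis using lu lv unz[of t] unfolding on_line_def by simp
  qed
  show ?thesis
  proof (rule ccontr)
    assume no: "\<not> ?thesis"
    have Gv: "eval3 G v0 v1 v2 \<noteq> 0" using no lv vnz unfolding on_line_def by blast
    define g where "g = linepoly G u0 u1 u2 v0 v1 v2"
    have groot: "poly g t \<noteq> 0" for t using no online[of t] unfolding g_def poly_linepoly by blast
    have "degree g = 0"
    proof (rule ccontr)
      assume "degree g \<noteq> 0"
      then obtain t where "poly g t = 0" using alg_closed_imp_poly_has_root by blast
      thus False using groot by blast
    qed
    hence gc: "poly g t = coeff g 0" for t
      by (simp add: poly_altdef)
    define c where "c = coeff g 0"
    define h where "h = linepoly G v0 v1 v2 u0 u1 u2"
    have hs: "poly h s = poly (monom c e) s" if s: "s \<noteq> 0" for s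
    proof -
      have "poly h s = eval3 G (s * (u0 + (1/s)*v0)) (s * (u1 + (1/s)*v1)) (s * (u2 + (1/s)*v2))"
        unfolding h_def poly_linepoly using s by (simp add: algebra_simps)
      also have "\<dots> = s ^ e * eval3 G (u0 + (1/s)*v0) (u1 + (1/s)*v1) (u2 + (1/s)*v2)"
        by (rule scaling[OF hom])
      also have "eval3 G (u0 + (1/s)*v0) (u1 + (1/s)*v1) (u2 + (1/s)*v2) = c"
        using gc[of "1/s"] unfolding g_def poly_linepoly c_def by simp
      finally show ?thesis by (simp add: poly_monom mult.commute)
    qed
    have "h - monom c e = 0"
    proof (rule ccontr)
      assume nz: "h - monom c e \<noteq> 0"
      have "UNIV - {0} \<subseteq> {s. poly (h - monom c e) s = 0}" using hs by auto
      moreover have "finite {s. poly (h - monom c e) s = 0}" by (rule poly_roots_finite[OF nz])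
      ultimately have "finite (UNIV - {0::'b})" by (rule finite_subset)
      hence "finite (UNIV :: 'b set)" by simp
      thus False using alg_closed_infinite by blast
    qed
    hence "poly h 0 = poly (monom c e) 0" by simp
    also have "\<dots> = 0" using e by (simp add: poly_monom power_0_left)
    finally have "eval3 G v0 v1 v2 = 0" unfolding h_def poly_linepoly by simp
    thus False using Gv by blast
  qed
qed



lemma rhom_dvd: assumes "rhom f" "a dvd b" shows "f a dvd f b"
proof -
  from assms(2) obtain c where "b = a * c" by (elim dvdE)
  hence "f b = f a * f c" using rhomD(4)[OF assms(1)] by simp
  thus ?thesis by simp
qed

lemma rhom_unit: assumes "rhom f" "is_unit a" shows "is_unit (f a)"
  using rhom_dvd[OF assms] rhomD(2)[OF assms(1)] by simp

lemma prime_elem_iso: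
  fixes f :: "'a::{algebraic_semidom,comm_ring_1} \<Rightarrow> 'b::{algebraic_semidom,comm_ring_1}"
  assumes f: "rhom f" and g: "rhom g" and gf: "\<And>x. g (f x) = x" and fg: "\<And>x. f (g x) = x"
    and p: "prime_elem p"
  shows "prime_elem (f p)"
proof (rule prime_elemI)
  show "f p \<noteq> 0"
  proof
    assume "f p = 0" hence "g (f p) = 0" using rhomD(1)[OF g] by simp
    thus False using gf p by simp
  qed
  show "\<not> is_unit (f p)"
  proof
    assume "is_unit (f p)" hence "is_unit (g (f p))" by (rule rhom_unit[OF g])
    thus False using gf p by (simp add: prime_elem_def)
  qed
  fix a b assume "f p dvd a * b"
  hence "g (f p) dvd g (a * b)" by (rule rhom_dvd[OF g])
  hence "p dvd g a * g b" using gf rhomD(4)[OF g] by simp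
  hence "p dvd g a \<or> p dvd g b" using p by (simp add: prime_elem_dvd_mult_iff)
  thus "f p dvd a \<or> f p dvd b" using rhom_dvd[OF f] fg by metis
qed

lemma map3_comp: assumes "g 0 = 0" "f 0 = 0"
  shows "map3 f (map3 g A) = map3 (\<lambda>x. f (g x)) A"
  unfolding map3_def using assms by (simp add: map_poly_map_poly o_def)

lemma map_poly_id_fun: "map_poly (\<lambda>x. x) = (\<lambda>p. p)"
  by (rule ext) simp

lemma map3_id: "map3 (\<lambda>x. x) A = A"
  unfolding map3_def by (simp add: map_poly_id_fun)

lemma frob_0: "frob 0 = (0 :: 'a::finite_field alg_closure)" by simp
lemma frobi_0: "frobi 0 = (0 :: 'a::finite_field alg_closure)" by (rule rhomD(1)[OF rhom_frobi])

lemma map3_frobi_frob: "map3 frobi (map3 frob A) = (A :: 'a::finite_field alg_closure poly3)"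
  by (simp add: map3_comp frobi_0 map3_id)
lemma map3_frob_frobi: "map3 frob (map3 frobi A) = (A :: 'a::finite_field alg_closure poly3)"
  by (simp add: map3_comp frobi_0 map3_id)

lemma map3_frob_to_ac: "map3 frob (map3 to_ac F) = map3 to_ac (F :: 'a::finite_field poly3)"
  by (simp add: map3_comp)

lemma map3_of_ac_to_ac: "map3 of_ac (map3 to_ac F) = (F :: 'a::field poly3)"
  by (simp add: map3_comp map3_id)

lemma fixed3:
  assumes "map3 frob A = (A :: 'a::finite_field alg_closure poly3)"
  shows "map3 to_ac (map3 of_ac A) = A"
proof (rule poly3_eqI)
  fix i j k
  have "frob (coeff3 A i j k) = coeff3 A i j k" using arg_cong[OF assms, of "\<lambda>P. coeff3 P i j k"]
    by (simp add: coeff3_map3)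
  hence "coeff3 A i j k \<in> range (to_ac :: 'a \<Rightarrow> _)" by (simp add: frob_fixed_iff)
  thus "coeff3 (map3 to_ac (map3 of_ac A)) i j k = coeff3 A i j k"
    by (simp add: coeff3_map3 to_ac_of_ac)
qed

lemma unit_poly3:
  assumes "is_unit (U :: 'b::field poly3)"
  shows "\<exists>u. u \<noteq> 0 \<and> U = const3 u"
proof -
  obtain c1 :: "'b poly poly" where c1: "U = [:c1:]" "c1 dvd 1" using assms is_unit_poly_iff by blast
  obtain c2 :: "'b poly" where c2: "c1 = [:c2:]" "c2 dvd 1" using c1(2) is_unit_poly_iff by blast
  obtain c3 :: 'b where c3: "c2 = [:c3:]" "c3 dvd 1" using c2(2) is_unit_poly_iff by blast
  show ?thesis using c1 c2 c3 unfolding const3_def by (intro exI[of _ c3]) auto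
qed

lemma coeff3_const3_mult: "coeff3 (const3 a * P) i j k = a * coeff3 P i j k"
  unfolding const3_def coeff3_def by simp

lemma coeff3_mult_const3: "coeff3 (P * const3 a) i j k = a * coeff3 P i j k"
  using coeff3_const3_mult[of a P] by (simp add: mult.commute)

lemma nonzero_coeff3: assumes "P \<noteq> 0" shows "\<exists>i j k. coeff3 P i j k \<noteq> 0"
  using assms poly3_eqI[of P 0] by auto

lemma const3_mult: "const3 (a::'a::comm_ring_1) * const3 b = const3 (a * b)"
  unfolding const3_def by (simp add: mult.commute)

lemma const3_1: "const3 (1::'a::comm_ring_1) = 1"
  unfolding const3_def by (simp add: one_pCons)

lemma singular_from_factors:
  fixes G G' S :: "'b::field poly3"
  assumes "eval3 G x0 x1 x2 = 0" "eval3 G' x0 x1 x2 = 0" "nonzero3 x0 x1 x2"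
  shows "singular_point (G * (G' * S)) x0 x1 x2"
  using assms unfolding singular_point_def on_curve_def
  by (simp add: eval3_pd_mult[OF derivl_pd0] eval3_pd_mult[OF derivl_pd1] eval3_pd_mult[OF derivl_pd2] eval3_hom)



theorem lemma3p9:
  fixes F :: "'a::finite_field poly3" and d :: nat and l0 l1 l2 :: 'a
  assumes hom: "homogeneous3 F d"
    and irr: "irreducible F"
    and fnc: "frobenius_nonclassical F"
    and lnz: "nonzero3 l0 l1 l2"
    and trans: "transverse (map3 to_ac F) (to_ac l0) (to_ac l1) (to_ac l2)"
  shows "(\<forall>x0 x1 x2 :: 'a alg_closure.
            on_curve (map3 to_ac F) x0 x1 x2 \<and> on_line (to_ac l0) (to_ac l1) (to_ac l2) x0 x1 x2
            \<longrightarrow> rational_point to_ac x0 x1 x2)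
         \<and> irreducible (map3 to_ac F)"
proof -
  have P1: "\<forall>x0 x1 x2 :: 'a alg_closure.
            on_curve (map3 to_ac F) x0 x1 x2 \<and> on_line (to_ac l0) (to_ac l1) (to_ac l2) x0 x1 x2
            \<longrightarrow> rational_point to_ac x0 x1 x2"
    using part1[OF hom fnc trans] by blast
  have P2: "irreducible (map3 to_ac F)"
  proof -
    define FK where "FK = map3 to_ac F"
    define L0 where "L0 = (to_ac l0 :: 'a alg_closure)"
    define L1 where "L1 = (to_ac l1 :: 'a alg_closure)"
    define L2 where "L2 = (to_ac l2 :: 'a alg_closure)"
    note rK = rhom_map3[OF rhom_to_ac]
    note rF = rhom_map3[OF rhom_frob]
    note rFi = rhom_map3[OF rhom_frobi]
    have F0: "F \<noteq> 0" and Fnu: "\<not> is_unit F" using irr by (auto simp: irreducible_def)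
    have inj: "A = B" if "map3 to_ac A = map3 to_ac B" for A B :: "'a poly3"
      using arg_cong[OF that, of "map3 of_ac"] by (simp add: map3_of_ac_to_ac)
    have FK0: "FK \<noteq> 0"
    proof
      assume "FK = 0"
      hence "map3 to_ac F = map3 to_ac 0" using rhomD(1)[OF rK] unfolding FK_def by simp
      thus False using inj F0 by blast
    qed
    have FKfix: "map3 frob FK = FK" by (simp add: FK_def map3_frob_to_ac)
    have descent: "map3 frob B = B"
      if "map3 frob A = A" "A \<noteq> 0" "map3 frob (A * B) = A * B" for A B :: "'a alg_closure poly3"
    proof -
      have "A * map3 frob B = A * B" using that rhomD(4)[OF rF, of A B] by simp
      thus ?thesis using that(2) by simp
    qed
    have FKnu: "\<not> is_unit FK"
    proof
      assume "is_unit FK"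
      then obtain U where U: "1 = FK * U" by (elim dvdE)
      have "map3 frob (FK * U) = FK * U" using U rhomD(2)[OF rF] by metis
      hence Ufix: "map3 frob U = U" using descent[OF FKfix FK0] by blast
      have "map3 to_ac (F * map3 of_ac U) = map3 to_ac 1"
        using fixed3[OF Ufix] U rhomD(2,4)[OF rK] unfolding FK_def by metis
      hence "F * map3 of_ac U = 1" by (rule inj)
      hence "is_unit F" by (metis dvd_triv_left)
      thus False using Fnu by blast
    qed
    show ?thesis
    proof (rule ccontr)
      assume nirr: "\<not> irreducible (map3 to_ac F)"
      then obtain A B where AB: "FK = A * B" "\<not> is_unit A" "\<not> is_unit B"
        using FK0 FKnu unfolding irreducible_def FK_def by auto
      have A0: "A \<noteq> 0" using AB FK0 by auto
      obtain G where G: "G dvd A" "prime G" using prime_divisor_exists[OF A0 AB(2)] by blast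
      have pG: "prime_elem G" using G(2) by blast
      obtain A' where A': "A = G * A'" using G(1) by (elim dvdE)
      define H0 where "H0 = A' * B"
      have FKG: "FK = G * H0" using AB(1) A' H0_def by (simp add: mult.assoc)
      have G0: "G \<noteq> 0" and Gnu: "\<not> is_unit G" using pG by (auto simp: prime_elem_def)
      have H0nu: "\<not> is_unit H0" using AB(3) unfolding H0_def by (simp add: is_unit_mult_iff)
      have homK: "homogeneous3 FK d" unfolding FK_def by (rule map3_to_ac_homogeneous[OF hom])
      obtain e where homG: "homogeneous3 G e" using homogeneous_factor[OF homK FK0 FKG] by blast
      have e0: "e > 0"
      proof (rule ccontr)
        assume "\<not> e > 0" hence "e = 0" by simp
        hence Gc: "G = const3 (coeff3 G 0 0 0)" using homogeneous0_const homG by simp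
        have "coeff3 G 0 0 0 \<noteq> 0"
        proof
          assume "coeff3 G 0 0 0 = 0"
          hence "G = 0" using Gc by (simp add: const3_def)
          thus False using G0 by blast
        qed
        hence "is_unit G" using Gc is_unit_const3 by metis
        thus False using Gnu by blast
      qed
      have Lnz: "nonzero3 L0 L1 L2" using lnz unfolding nonzero3_def L0_def L1_def L2_def by simp
      obtain x0 x1 x2 where ol: "on_line L0 L1 L2 x0 x1 x2" and Gx: "eval3 G x0 x1 x2 = 0"
        using find_point[OF homG e0 Lnz] by blast
      have oc: "on_curve FK x0 x1 x2" using ol Gx FKG unfolding on_curve_def on_line_def by (simp add: eval3_hom)
      have "rational_point to_ac x0 x1 x2"
        using part1[OF hom fnc trans] oc ol unfolding FK_def L0_def L1_def L2_def by blast
      then obtain c where c: "c \<noteq> 0" "c * x0 \<in> range (to_ac :: 'a \<Rightarrow> _)" "c * x1 \<in> range (to_ac :: 'a \<Rightarrow> _)"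
          "c * x2 \<in> range (to_ac :: 'a \<Rightarrow> _)"
        unfolding rational_point_def by blast
      define y0 where "y0 = c * x0"
      define y1 where "y1 = c * x1"
      define y2 where "y2 = c * x2"
      have ol': "on_line L0 L1 L2 y0 y1 y2"
      proof -
        have "L0 * y0 + L1 * y1 + L2 * y2 = c * (L0 * x0 + L1 * x1 + L2 * x2)"
          unfolding y0_def y1_def y2_def by (simp add: algebra_simps)
        thus ?thesis using ol c(1) unfolding on_line_def nonzero3_def y0_def y1_def y2_def by simp
      qed
      have Gy: "eval3 G y0 y1 y2 = 0"
        using scaling[OF homG, of c x0 x1 x2] Gx unfolding y0_def y1_def y2_def by simp
      have fy: "frob y0 = y0" "frob y1 = y1" "frob y2 = y2"
        using c frob_fixed_iff unfolding y0_def y1_def y2_def by blast+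
      define G' where "G' = map3 frob G"
      have "eval3 G' y0 y1 y2 = frob (eval3 G y0 y1 y2)"
        using eval3_map[OF rhom_frob, of G y0 y1 y2] fy unfolding G'_def by simp
      hence G'y: "eval3 G' y0 y1 y2 = 0" using Gy by simp
      have pG': "prime_elem G'"
        unfolding G'_def by (rule prime_elem_iso[OF rF rFi map3_frobi_frob map3_frob_frobi pG])
      have G'0: "G' \<noteq> 0" using pG' by auto
      have G'dvd: "G' dvd FK"
        using rhom_dvd[OF rF, of G FK] FKG FKfix unfolding G'_def by simp
      show False
      proof (cases "G dvd G'")
        case True
        obtain U where U: "G' = G * U" using True by (elim dvdE)
        have Uu: "is_unit U"
        proof -
          have "G' dvd G * U" using U by simp
          hence "G' dvd G \<or> G' dvd U" using pG' by (simp add: prime_elem_dvd_mult_iff)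
          thus ?thesis
          proof
            assume "G' dvd G"
            then obtain W where W: "G = G' * W" by (elim dvdE)
            hence "G * 1 = G * (U * W)" using U by (simp add: mult_ac)
            hence "U * W = 1" using G0 mult_left_cancel[of G 1 "U * W"] by simp
            thus ?thesis by (metis dvd_triv_left)
          next
            assume "G' dvd U"
            then obtain V where V: "U = G' * V" by (elim dvdE)
            hence "G' * 1 = G' * (G * V)" using U by (simp add: mult_ac)
            hence "G * V = 1" using G'0 mult_left_cancel[of G' 1 "G * V"] by simp
            hence "is_unit G" by (metis dvd_triv_left)
            thus ?thesis using Gnu by blast
          qed
        qed
        obtain u where u: "u \<noteq> 0" "U = const3 u" using unit_poly3[OF Uu] by blast
        obtain i j k where ijk: "coeff3 G i j k \<noteq> 0" using nonzero_coeff3[OF G0] by blast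
        define c0 where "c0 = coeff3 G i j k"
        have c00: "c0 \<noteq> 0" using ijk c0_def by simp
        define G1 where "G1 = const3 (1/c0) * G"
        have cG': "coeff3 G' i' j' k' = u * coeff3 G i' j' k'" for i' j' k'
          using U u by (simp add: coeff3_mult_const3)
        have cG'': "coeff3 G' i' j' k' = frob (coeff3 G i' j' k')" for i' j' k'
          unfolding G'_def by (simp add: coeff3_map3)
        have uc: "u * c0 = frob c0" using cG'[of i j k] cG''[of i j k] c0_def by simp
        have fc0: "frob c0 \<noteq> 0" using c00 by simp
        have f1c0: "frob (1 / c0) = 1 / frob c0" by (simp add: frob_divide rhomD(2)[OF rhom_frob])
        have G1fix: "map3 frob G1 = G1"
        proof (rule poly3_eqI)
          fix i' j' k'
          have e1: "coeff3 G1 i' j' k' = (1/c0) * coeff3 G i' j' k'" unfolding G1_def by (rule coeff3_const3_mult)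
          have "coeff3 (map3 frob G1) i' j' k' = frob (coeff3 G1 i' j' k')" by (simp add: coeff3_map3)
          also have "\<dots> = frob (1/c0) * frob (coeff3 G i' j' k')" unfolding e1 by (rule rhomD(4)[OF rhom_frob])
          also have "\<dots> = (1 / frob c0) * (u * coeff3 G i' j' k')" using cG' cG'' f1c0 by simp
          also have "\<dots> = (1 / c0) * coeff3 G i' j' k'"
            using uc[symmetric] c00 u(1) by (simp add: field_simps)
          also have "\<dots> = coeff3 G1 i' j' k'" unfolding G1_def by (simp add: coeff3_const3_mult)
          finally show "coeff3 (map3 frob G1) i' j' k' = coeff3 G1 i' j' k'" .
        qed
        have G1_0: "G1 \<noteq> 0"
        proof
          assume "G1 = 0"
          hence "coeff3 G1 i j k = 0" by simp
          thus False unfolding G1_def using c00 by (simp add: coeff3_const3_mult c0_def[symmetric])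
        qed
        define H1 where "H1 = const3 c0 * H0"
        have FK1: "FK = G1 * H1"
        proof -
          have "G1 * H1 = (const3 (1/c0) * const3 c0) * (G * H0)" unfolding G1_def H1_def by (simp add: mult_ac)
          also have "const3 (1/c0) * const3 c0 = 1" using c00 by (simp add: const3_mult const3_1)
          finally show ?thesis using FKG by simp
        qed
        have H1fix: "map3 frob H1 = H1" using descent[OF G1fix G1_0] FK1 FKfix by simp
        define G0' where "G0' = map3 of_ac G1"
        define H0' where "H0' = map3 of_ac H1"
        have G0'e: "map3 to_ac G0' = G1" unfolding G0'_def by (rule fixed3[OF G1fix])
        have H0'e: "map3 to_ac H0' = H1" unfolding H0'_def by (rule fixed3[OF H1fix])
        have "map3 to_ac (G0' * H0') = map3 to_ac F"
          using G0'e H0'e FK1 rhomD(4)[OF rK, of G0' H0'] unfolding FK_def by simp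
        hence "F = G0' * H0'" by (rule inj[symmetric])
        hence "is_unit G0' \<or> is_unit H0'" by (rule irreducibleD[OF irr])
        thus False
        proof
          assume "is_unit G0'"
          hence u1: "is_unit G1" using rhom_unit[OF rK] G0'e by metis
          have "G = const3 c0 * G1"
          proof -
            have "const3 c0 * G1 = (const3 c0 * const3 (1/c0)) * G" unfolding G1_def by (simp add: mult_ac)
            also have "const3 c0 * const3 (1/c0) = 1" using c00 by (simp add: const3_mult const3_1)
            finally show ?thesis by simp
          qed
          hence "is_unit G" using u1 is_unit_const3[OF c00] by (simp add: is_unit_mult_iff)
          thus False using Gnu by blast
        next
          assume "is_unit H0'"
          hence u1: "is_unit H1" using rhom_unit[OF rK] H0'e by metis
          have "H0 = const3 (1/c0) * H1"
          proof -
            have "const3 (1/c0) * H1 = (const3 (1/c0) * const3 c0) * H0" unfolding H1_def by (simp add: mult_ac)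
            also have "const3 (1/c0) * const3 c0 = 1" using c00 by (simp add: const3_mult const3_1)
            finally show ?thesis by simp
          qed
          hence "is_unit H0" using u1 is_unit_const3[of "1/c0"] c00 by (simp add: is_unit_mult_iff)
          thus False using H0nu by blast
        qed
      next
        case False
        obtain R where R: "FK = G' * R" using G'dvd by (elim dvdE)
        have "G dvd G' * R" using FKG R by (metis dvd_triv_left)
        hence "G dvd R" using pG False by (simp add: prime_elem_dvd_mult_iff)
        then obtain S where S: "R = G * S" by (elim dvdE)
        have FKS: "FK = G * (G' * S)" using R S by (simp add: mult_ac)
        have "singular_point FK y0 y1 y2"
          unfolding FKS by (rule singular_from_factors[OF Gy G'y]) (use ol' in \<open>simp add: on_line_def\<close>)
        moreover have "\<not> singular_point FK y0 y1 y2"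
          using trans ol' unfolding transverse_def FK_def L0_def L1_def L2_def by blast
        ultimately show False by blast
      qed
    qed
  qed
  show ?thesis using P1 P2 by blast
qed


end
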